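(* Let $\mu$ be a distribution over $\{-1,+1\}^n$ and $\alpha\in(0,1)$. Suppose that for every $\Lambda\subseteq[n]$ and every $\sigma\in\Omega(\mu_\Lambda)$, the conditional marginal distribution $\mu^\sigma_{[n]\setminus\Lambda}$ is $(1/\alpha)$-product dominated. Then for every integer $\ell$ with $1/\alpha\le\ell\le n$, the distribution $\mu$ satisfies $\ell$-uniform block factorization of entropy with parameter $C=\left(\frac{\mathrm e n}{\ell}\right)^{1/\alpha+1}$.
   Context: For a distribution $\mu$ on $\{-1,+1\}^n$: $\Omega(\mu)$ is its support; $\mu_\Lambda$ the marginal on $\Lambda$, $\mu_i=\mu_{\{i\}}$; $\mu^\sigma$ the conditional distribution given $\sigma\in\Omega(\mu_\Lambda)$ on $\Lambda$, $\mu^\sigma_S$ its marginal on $S$. Product domination: $\nu$ on $\{-1,+1\}^m$ is $(1/\alpha)$-product dominated if for all $z\in\mathbb R_{>0}^m$, $g_\nu(z_1^\alpha,\dots,z_m^\alpha)^{1/\alpha}\le\prod_{i=1}^m(\nu_i(+1)z_i+\nu_i(-1))$, where $g_\nu(z)=\sum_\sigma\nu(\sigma)\prod_{i:\sigma_i=+1}z_i$. Uniform block factorization: for integers $1\le\ell\le n$ and $C>0$, $\mu$ satisfies $\ell$-uniform block factorization of entropy with parameter $C$ if for all $f:\Omega(\mu)\to\mathbb R_{\ge0}$, $\mathrm{Ent}_\mu(f)\le\frac{C}{\binom n\ell}\sum_{S\in\binom{[n]}{\ell}}\mu[\mathrm{Ent}_S f]$, where $\mu[\mathrm{Ent}_S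 f]=\sum_{\sigma\in\Omega(\mu_{[n]\setminus S})}\mu_{[n]\setminus S}(\sigma)\mathrm{Ent}_{\mu^\sigma}(f)$ and $\mathrm{Ent}_\nu(f)=\mathbb E_\nu[f\log f]-\mathbb E_\nu[f]\log\mathbb E_\nu[f]$ ($0\log0=0$). *)

theory Defs
  imports "HOL-Analysis.Analysis" "HOL-Library.FuncSet"
begin

text \<open>Configurations on an index set S (a subset of [n] = {0..<n}) are extensional
  functions S \<rightarrow> {-1,+1} (value undefined outside S).\<close>

definition cube :: "nat set \<Rightarrow> (nat \<Rightarrow> int) set" where
  "cube S = PiE S (\<lambda>_. {-1, 1})"

definition is_dist :: "nat set \<Rightarrow> ((nat \<Rightarrow> int) \<Rightarrow> real) \<Rightarrow> bool" where
  "is_dist S \<nu> \<longleftrightarrow> (\<forall>\<sigma>. 0 \<le> \<nu> \<sigma>) \<and> (\<forall>\<sigma>. \<sigma> \<notin> cube S \<longrightarrow> \<nu> \<sigma> = 0) \<and> sum \<nu> (cube S) = 1"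

definition supp :: "nat set \<Rightarrow> ((nat \<Rightarrow> int) \<Rightarrow> real) \<Rightarrow> (nat \<Rightarrow> int) set" where
  "supp S \<nu> = {\<sigma> \<in> cube S. \<nu> \<sigma> \<noteq> 0}"

definition marg :: "nat set \<Rightarrow> ((nat \<Rightarrow> int) \<Rightarrow> real) \<Rightarrow> nat set \<Rightarrow> (nat \<Rightarrow> int) \<Rightarrow> real" where
  "marg S \<nu> \<Lambda> \<tau> = (\<Sum>\<sigma>\<in>cube S. if restrict \<sigma> \<Lambda> = \<tau> then \<nu> \<sigma> else 0)"

definition cond :: "nat set \<Rightarrow> ((nat \<Rightarrow> int) \<Rightarrow> real) \<Rightarrow> nat set \<Rightarrow> (nat \<Rightarrow> int) \<Rightarrow> (nat \<Rightarrow> int) \<Rightarrow> real" where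
  "cond S \<nu> \<Lambda> \<tau> \<eta> = (if \<eta> \<in> cube S \<and> restrict \<eta> \<Lambda> = \<tau> then \<nu> \<eta> / marg S \<nu> \<Lambda> \<tau> else 0)"

definition site_prob :: "nat set \<Rightarrow> ((nat \<Rightarrow> int) \<Rightarrow> real) \<Rightarrow> nat \<Rightarrow> int \<Rightarrow> real" where
  "site_prob S \<nu> i s = (\<Sum>\<sigma>\<in>cube S. if \<sigma> i = s then \<nu> \<sigma> else 0)"

definition gen_poly :: "nat set \<Rightarrow> ((nat \<Rightarrow> int) \<Rightarrow> real) \<Rightarrow> (nat \<Rightarrow> real) \<Rightarrow> real" where
  "gen_poly S \<nu> z = (\<Sum>\<sigma>\<in>cube S. \<nu> \<sigma> * (\<Prod>i\<in>{i\<in>S. \<sigma> i = 1}. z i))"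

definition product_dominated :: "nat set \<Rightarrow> ((nat \<Rightarrow> int) \<Rightarrow> real) \<Rightarrow> real \<Rightarrow> bool" where
  "product_dominated S \<nu> c \<longleftrightarrow>
     (\<forall>z::nat \<Rightarrow> real. (\<forall>i\<in>S. 0 < z i) \<longrightarrow>
        (gen_poly S \<nu> (\<lambda>i. z i powr (1 / c))) powr c
          \<le> (\<Prod>i\<in>S. site_prob S \<nu> i 1 * z i + site_prob S \<nu> i (-1)))"

definition xlogx :: "real \<Rightarrow> real" where
  "xlogx x = (if x = 0 then 0 else x * ln x)"

definition expect :: "nat set \<Rightarrow> ((nat \<Rightarrow> int) \<Rightarrow> real) \<Rightarrow> ((nat \<Rightarrow> int) \<Rightarrow> real) \<Rightarrow> real" where
  "expect S \<nu> f = (\<Sum>\<sigma>\<in>cube S. \<nu> \<sigma> * f \<sigma>)"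

definition Ent :: "nat set \<Rightarrow> ((nat \<Rightarrow> int) \<Rightarrow> real) \<Rightarrow> ((nat \<Rightarrow> int) \<Rightarrow> real) \<Rightarrow> real" where
  "Ent S \<nu> f = expect S \<nu> (\<lambda>\<sigma>. xlogx (f \<sigma>)) - xlogx (expect S \<nu> f)"

definition block_ent :: "nat \<Rightarrow> ((nat \<Rightarrow> int) \<Rightarrow> real) \<Rightarrow> nat set \<Rightarrow> ((nat \<Rightarrow> int) \<Rightarrow> real) \<Rightarrow> real" where
  "block_ent n \<mu> B f =
     (\<Sum>\<tau>\<in>supp ({0..<n} - B) (marg {0..<n} \<mu> ({0..<n} - B)).
        marg {0..<n} \<mu> ({0..<n} - B) \<tau> * Ent {0..<n} (cond {0..<n} \<mu> ({0..<n} - B) \<tau>) f)"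

definition uniform_block_factorization :: "nat \<Rightarrow> ((nat \<Rightarrow> int) \<Rightarrow> real) \<Rightarrow> nat \<Rightarrow> real \<Rightarrow> bool" where
  "uniform_block_factorization n \<mu> l C \<longleftrightarrow>
     (\<forall>f. (\<forall>\<sigma>\<in>supp {0..<n} \<mu>. 0 \<le> f \<sigma>) \<longrightarrow>
        Ent {0..<n} \<mu> f
          \<le> C / real (n choose l) * (\<Sum>B\<in>{B. B \<subseteq> {0..<n} \<and> card B = l}. block_ent n \<mu> B f))"

end

theory Submission
  imports Defs
begin


lemma xlogx_eq: "xlogx x = x * ln x"
  by (simp add: xlogx_def)

definition psi :: "real \<Rightarrow> real \<Rightarrow> real" where
  "psi a b = b * xlogx (a / b)"

lemma psi_eq: "psi a b = (if b = 0 then 0 else a * ln (a / b))"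
  by (simp add: psi_def xlogx_eq)

lemma psi_zero2[simp]: "psi a 0 = 0" by (simp add: psi_def)
lemma psi_zero1[simp]: "psi 0 b = 0" by (simp add: psi_def xlogx_def)

lemma psi_scale: "M > 0 \<Longrightarrow> psi (M*a) (M*b) = M * psi a b"
  by (simp add: psi_eq)

lemma finite_cube[simp]: "finite S \<Longrightarrow> finite (cube S)"
  by (simp add: cube_def finite_PiE)

lemma restrict_cube: "\<sigma> \<in> cube S \<Longrightarrow> U \<subseteq> S \<Longrightarrow> restrict \<sigma> U \<in> cube U"
  unfolding cube_def by (auto simp: PiE_def Pi_def)

lemma sum_marg:
  assumes "finite S" "U \<subseteq> S"
  shows "(\<Sum>\<eta>\<in>cube U. marg S w U \<eta> * g \<eta>) = (\<Sum>\<sigma>\<in>cube S. w \<sigma> * g (restrict \<sigma> U))"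
proof -
  have fU: "finite U" using assms finite_subset by blast
  have "(\<Sum>\<eta>\<in>cube U. marg S w U \<eta> * g \<eta>)
     = (\<Sum>\<eta>\<in>cube U. \<Sum>\<sigma>\<in>cube S. (if restrict \<sigma> U = \<eta> then w \<sigma> * g \<eta> else 0))"
    unfolding marg_def sum_distrib_right by (intro sum.cong refl) auto
  also have "\<dots> = (\<Sum>\<sigma>\<in>cube S. \<Sum>\<eta>\<in>cube U. (if restrict \<sigma> U = \<eta> then w \<sigma> * g \<eta> else 0))"
    by (rule sum.swap)
  also have "\<dots> = (\<Sum>\<sigma>\<in>cube S. w \<sigma> * g (restrict \<sigma> U))"
    apply (rule sum.cong[OF refl])
    using restrict_cube[OF _ assms(2)] fU by (simp add: sum.delta)
  finally show ?thesis .
qed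

lemma sum_marg1:
  assumes "finite S" "U \<subseteq> S"
  shows "(\<Sum>\<eta>\<in>cube U. marg S w U \<eta>) = (\<Sum>\<sigma>\<in>cube S. w \<sigma>)"
  using sum_marg[OF assms, of w "\<lambda>_. 1"] by simp

lemma sum_fiber:
  assumes "finite S" "U \<subseteq> S"
  shows "(\<Sum>\<sigma>\<in>cube S. (G \<sigma>::real)) = (\<Sum>\<tau>\<in>cube U. \<Sum>\<sigma>\<in>cube S. if restrict \<sigma> U = \<tau> then G \<sigma> else 0)"
  using sum_marg1[OF assms, of G] unfolding marg_def by simp

lemma restrict_self_cube: "\<sigma> \<in> cube S \<Longrightarrow> restrict \<sigma> S = \<sigma>"
  unfolding cube_def by (auto simp: PiE_def extensional_def restrict_def)

lemma marg_full: "finite S \<Longrightarrow> \<tau> \<in> cube S \<Longrightarrow> marg S w S \<tau> = w \<tau>"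
  unfolding marg_def by (simp add: restrict_self_cube sum.delta cong: if_cong)

lemma cube_empty: "cube {} = {\<lambda>_. undefined}"
  by (simp add: cube_def)

lemma marg_empty: "marg S w {} \<tau> = (if \<tau> = (\<lambda>_. undefined) then sum w (cube S) else 0)"
  unfolding marg_def by (auto simp: restrict_def)




lemma gibbs:
  fixes X :: "'a set" and p f h :: "'a \<Rightarrow> real"
  assumes X: "finite X" and p: "\<forall>x\<in>X. 0 \<le> p x" and f: "\<forall>x\<in>X. 0 < p x \<longrightarrow> 0 \<le> f x"
    and h: "\<forall>x\<in>X. 0 < h x"
  shows "(\<Sum>x\<in>X. p x * f x * ln (h x)) \<le> (\<Sum>x\<in>X. p x * xlogx (f x)) - xlogx (\<Sum>x\<in>X. p x * f x)
           + (\<Sum>x\<in>X. p x * f x) * ln (\<Sum>x\<in>X. p x * h x)"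
proof -
  define E where "E = (\<Sum>x\<in>X. p x * f x)"
  define H where "H = (\<Sum>x\<in>X. p x * h x)"
  have pf: "\<forall>x\<in>X. 0 \<le> p x * f x" using p f by (metis less_eq_real_def mult_eq_0_iff mult_nonneg_nonneg)
  have E0: "0 \<le> E" unfolding E_def using pf by (simp add: sum_nonneg)
  have xl: "(\<Sum>x\<in>X. p x * xlogx (f x)) = (\<Sum>x\<in>X. p x * f x * ln (f x))"
    by (simp add: xlogx_eq mult.assoc)
  show ?thesis
  proof (cases "E = 0")
    case True
    then have z: "\<forall>x\<in>X. p x * f x = 0" using pf X unfolding E_def by (simp add: sum_nonneg_eq_0_iff)
    have "(\<Sum>x\<in>X. p x * f x * ln (h x)) = 0" using z by (intro sum.neutral) simp
    moreover have "(\<Sum>x\<in>X. p x * f x * ln (f x)) = 0" using z by (intro sum.neutral) simp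
    ultimately show ?thesis using True xl unfolding E_def[symmetric] by (simp add: xlogx_def)
  next
    case False
    then have Ep: "E > 0" using E0 by simp
    then obtain y where y: "y \<in> X" "p y * f y \<noteq> 0" unfolding E_def
      by (metis (no_types, lifting) sum.neutral less_irrefl)
    have "p y > 0" using y p by (metis less_eq_real_def mult_zero_left)
    then have Hp: "H > 0" unfolding H_def using X y h p
      by (intro sum_pos2[of X y]) (auto intro: mult_nonneg_nonneg less_imp_le)
    have pt: "p x * f x * (ln (h x) - ln (f x) + ln E - ln H) \<le> p x * h x * E / H - p x * f x"
      if x: "x \<in> X" for x
    proof (cases "p x * f x = 0")
      case True
      have "0 \<le> p x * h x * E / H" using p h x Ep Hp by (simp add: less_imp_le)
      then show ?thesis unfolding True by simp
    next
      case False
      then have px: "p x > 0" and fx: "f x > 0" using p f x pf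
        by (metis less_eq_real_def mult_zero_left, metis less_eq_real_def mult_zero_left mult_zero_right)
      have hx: "h x > 0" using h x by simp
      have "ln (h x * E / (f x * H)) \<le> h x * E / (f x * H) - 1"
        using hx Ep fx Hp by (intro ln_le_minus_one) simp
      moreover have "ln (h x * E / (f x * H)) = ln (h x) - ln (f x) + ln E - ln H"
        using hx Ep fx Hp by (simp add: ln_div ln_mult)
      ultimately have "ln (h x) - ln (f x) + ln E - ln H \<le> h x * E / (f x * H) - 1" by simp
      then have "p x * f x * (ln (h x) - ln (f x) + ln E - ln H) \<le> p x * f x * (h x * E / (f x * H) - 1)"
        using px fx by (intro mult_left_mono) auto
      also have "\<dots> = p x * h x * E / H - p x * f x" using fx Hp by (simp add: field_simps)
      finally show ?thesis .
    qed
    have "(\<Sum>x\<in>X. p x * f x * (ln (h x) - ln (f x) + ln E - ln H)) \<le> (\<Sum>x\<in>X. p x * h x * E / H - p x * f x)"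
      using pt by (rule sum_mono)
    also have "\<dots> = H * E / H - E" unfolding H_def E_def
      by (simp add: sum_subtractf sum_divide_distrib[symmetric] sum_distrib_right[symmetric])
    also have "\<dots> = 0" using Hp by simp
    finally have "(\<Sum>x\<in>X. p x * f x * ln (h x)) - (\<Sum>x\<in>X. p x * f x * ln (f x)) + E * ln E - E * ln H \<le> 0"
      unfolding E_def by (simp add: algebra_simps sum_subtractf sum_distrib_left sum_distrib_right sum.distrib)
    then show ?thesis using xl unfolding E_def[symmetric] H_def[symmetric] by (simp add: xlogx_eq)
  qed
qed




lemma local_ei:
  fixes X :: "(nat \<Rightarrow> int) set" and p f :: "(nat \<Rightarrow> int) \<Rightarrow> real" and U :: "nat set"
    and \<alpha> :: real and Q :: "nat \<Rightarrow> int \<Rightarrow> real"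
  assumes X: "finite X" and U: "finite U" and p: "\<forall>x\<in>X. 0 \<le> p x" and p1: "sum p X = 1"
    and f: "\<forall>x\<in>X. 0 < p x \<longrightarrow> 0 \<le> f x"
    and coord: "\<forall>x\<in>X. \<forall>i\<in>U. x i = 1 \<or> x i = -1"
    and a: "0 < \<alpha>"
    and PD: "\<forall>z. (\<forall>i\<in>U. 0 < z i) \<longrightarrow>
       (\<Sum>x\<in>X. p x * (\<Prod>i\<in>{i\<in>U. x i = 1}. z i powr \<alpha>)) powr (1/\<alpha>) \<le> (\<Prod>i\<in>U. Q i 1 * z i + Q i (-1))"
    and Qdef: "\<And>i s. Q i s = (\<Sum>x\<in>X. if x i = s then p x else 0)"
  shows "\<alpha> * (\<Sum>i\<in>U. psi (\<Sum>x\<in>X. if x i = 1 then p x * f x else 0) (Q i 1)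
                    + psi (\<Sum>x\<in>X. if x i = -1 then p x * f x else 0) (Q i (-1))
                    - xlogx (\<Sum>x\<in>X. p x * f x))
         \<le> (\<Sum>x\<in>X. p x * xlogx (f x)) - xlogx (\<Sum>x\<in>X. p x * f x)"
proof -
  define P where "P i s = (\<Sum>x\<in>X. if x i = s then p x * f x else 0)" for i s
  define E where "E = (\<Sum>x\<in>X. p x * f x)"
  have pf: "\<forall>x\<in>X. 0 \<le> p x * f x" using p f by (metis less_eq_real_def mult_eq_0_iff mult_nonneg_nonneg)
  have E0: "0 \<le> E" unfolding E_def using pf by (simp add: sum_nonneg)
  have Pnn: "0 \<le> P i s" for i s unfolding P_def using pf by (intro sum_nonneg) auto
  have Qnn: "0 \<le> Q i s" for i s unfolding Qdef using p by (intro sum_nonneg) auto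
  have Qsum: "Q i 1 + Q i (-1) = 1" if "i \<in> U" for i
  proof -
    have "Q i 1 + Q i (-1) = (\<Sum>x\<in>X. (if x i = 1 then p x else 0) + (if x i = -1 then p x else 0))"
      unfolding Qdef by (simp add: sum.distrib)
    also have "\<dots> = sum p X" using coord that by (intro sum.cong) auto
    finally show ?thesis using p1 by simp
  qed
  have Psum: "P i 1 + P i (-1) = E" if "i \<in> U" for i
  proof -
    have "P i 1 + P i (-1) = (\<Sum>x\<in>X. (if x i = 1 then p x * f x else 0) + (if x i = -1 then p x * f x else 0))"
      unfolding P_def by (simp add: sum.distrib)
    also have "\<dots> = E" unfolding E_def using coord that by (intro sum.cong) auto
    finally show ?thesis .
  qed
  have Q0: "P i s = 0" if "Q i s = 0" for i s
  proof -
    have "\<forall>x\<in>X. (if x i = s then p x else 0) = 0"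
      using that X p unfolding Qdef by (subst sum_nonneg_eq_0_iff[symmetric]) auto
    then show ?thesis unfolding P_def by (intro sum.neutral) auto
  qed
  have xl: "(\<Sum>x\<in>X. p x * xlogx (f x)) = (\<Sum>x\<in>X. p x * f x * ln (f x))"
    by (simp add: xlogx_eq mult.assoc)
  have main: "\<alpha> * (\<Sum>i\<in>U. psi (P i 1) (Q i 1) + psi (P i (-1)) (Q i (-1)) - xlogx E)
         \<le> (\<Sum>x\<in>X. p x * xlogx (f x)) - xlogx E"
  proof (cases "E = 0")
    case True
    have "P i s = 0" if "i \<in> U" "s = 1 \<or> s = -1" for i s
      using Psum[OF that(1)] Pnn[of i 1] Pnn[of i "-1"] True that(2) by auto
    then have L: "(\<Sum>i\<in>U. psi (P i 1) (Q i 1) + psi (P i (-1)) (Q i (-1)) - xlogx E) = 0"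
      using True by (intro sum.neutral) (auto simp: xlogx_def)
    have z: "\<forall>x\<in>X. p x * f x = 0" using pf X True unfolding E_def by (simp add: sum_nonneg_eq_0_iff)
    have "(\<Sum>x\<in>X. p x * f x * ln (f x)) = 0" using z by (intro sum.neutral) simp
    then show ?thesis using L xl True by (simp add: xlogx_def)
  next
    case False
    then have Ep: "E > 0" using E0 by simp
    then obtain y where y: "y \<in> X" "p y * f y \<noteq> 0" unfolding E_def
      by (metis (no_types, lifting) sum.neutral less_irrefl)
    have py: "p y > 0" using y p by (metis less_eq_real_def mult_zero_left)
    define K where "K = E * \<alpha> * real (card U)"
    have K0: "0 \<le> K" unfolding K_def using Ep a by simp
    show ?thesis
    proof (rule field_le_epsilon)
      fix e :: real assume e: "0 < e"
      define \<epsilon> where "\<epsilon> = e / (K + 1)"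
      have ep: "0 < \<epsilon>" unfolding \<epsilon>_def using e K0 by simp
      have Ke: "K * \<epsilon> \<le> e" unfolding \<epsilon>_def using e K0 by (simp add: field_simps)
      define x where "x i s = (if Q i s > 0 then (P i s / E + \<epsilon> * Q i s) / Q i s else 1)" for i s
      have xpos: "0 < x i s" for i s unfolding x_def using Pnn[of i s] Ep ep
        by (auto intro!: divide_pos_pos add_nonneg_pos)
      define h where "h \<sigma> = (\<Prod>i\<in>U. x i (\<sigma> i) powr \<alpha>)" for \<sigma> :: "nat \<Rightarrow> int"
      have hpos: "\<forall>\<sigma>\<in>X. 0 < h \<sigma>" unfolding h_def using xpos by (smt (verit) powr_gt_zero prod_pos)
      have G: "(\<Sum>\<sigma>\<in>X. p \<sigma> * f \<sigma> * ln (h \<sigma>)) \<le> (\<Sum>\<sigma>\<in>X. p \<sigma> * xlogx (f \<sigma>)) - xlogx E + E * ln (\<Sum>\<sigma>\<in>X. p \<sigma> * h \<sigma>)"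
        using gibbs[OF X p f hpos] unfolding E_def by simp
      define z where "z i = x i 1 / x i (-1)" for i
      have zpos: "\<forall>i\<in>U. 0 < z i" unfolding z_def using xpos by simp
      define W where "W = (\<Prod>i\<in>U. x i (-1) powr \<alpha>)"
      define Gs where "Gs = (\<Sum>\<sigma>\<in>X. p \<sigma> * (\<Prod>i\<in>{i\<in>U. \<sigma> i = 1}. z i powr \<alpha>))"
      define R where "R = (\<Prod>i\<in>U. Q i 1 * z i + Q i (-1))"
      have hW: "h \<sigma> = W * (\<Prod>i\<in>{i\<in>U. \<sigma> i = 1}. z i powr \<alpha>)" if "\<sigma> \<in> X" for \<sigma>
      proof -
        have "h \<sigma> = (\<Prod>i\<in>U. x i (-1) powr \<alpha> * (if \<sigma> i = 1 then z i powr \<alpha> else 1))"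
          unfolding h_def
        proof (intro prod.cong refl)
          fix i assume i: "i \<in> U"
          show "x i (\<sigma> i) powr \<alpha> = x i (-1) powr \<alpha> * (if \<sigma> i = 1 then z i powr \<alpha> else 1)"
          proof (cases "\<sigma> i = 1")
            case True
            have "x i (-1) powr \<alpha> > 0" using xpos[of i "-1"] by simp
            then show ?thesis using True unfolding z_def powr_divide by simp
          next
            case False
            then have "\<sigma> i = -1" using coord that i by auto
            then show ?thesis using False by simp
          qed
        qed
        also have "\<dots> = W * (\<Prod>i\<in>U. (if \<sigma> i = 1 then z i powr \<alpha> else 1))"
          unfolding W_def by (simp add: prod.distrib)
        also have "\<dots> = W * (\<Prod>i\<in>{i\<in>U. \<sigma> i = 1}. z i powr \<alpha>)"
          using U by (simp add: prod.inter_filter)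
        finally show ?thesis .
      qed
      have Zeq: "(\<Sum>\<sigma>\<in>X. p \<sigma> * h \<sigma>) = W * Gs"
        unfolding Gs_def sum_distrib_left using hW by (intro sum.cong) auto
      have Gs0: "0 \<le> Gs" unfolding Gs_def using p by (intro sum_nonneg mult_nonneg_nonneg prod_nonneg) auto
      have "Gs powr (1/\<alpha>) \<le> R" using PD zpos unfolding Gs_def R_def by blast
      then have "(Gs powr (1/\<alpha>)) powr \<alpha> \<le> R powr \<alpha>" using a by (intro powr_mono2) auto
      then have GsR: "Gs \<le> R powr \<alpha>" using a Gs0 by (simp add: powr_powr powr_one)
      have W0: "0 \<le> W" unfolding W_def by (simp add: prod_nonneg)
      have "W * R powr \<alpha> = ((\<Prod>i\<in>U. x i (-1)) * R) powr \<alpha>"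
        unfolding W_def by (simp add: prod_powr_distrib powr_mult)
      also have "(\<Prod>i\<in>U. x i (-1)) * R = (\<Prod>i\<in>U. 1 + \<epsilon>)"
        unfolding R_def prod.distrib[symmetric]
      proof (intro prod.cong refl)
        fix i assume i: "i \<in> U"
        have qx: "Q i s * x i s = P i s / E + \<epsilon> * Q i s" for s
          using Q0[of i s] Qnn[of i s] unfolding x_def by auto
        have "x i (-1) * (Q i 1 * z i + Q i (-1)) = Q i 1 * x i 1 + Q i (-1) * x i (-1)"
          unfolding z_def using xpos[of i "-1"] by (simp add: field_simps)
        also have "\<dots> = (P i 1 + P i (-1)) / E + \<epsilon> * (Q i 1 + Q i (-1))"
          unfolding qx by (simp add: field_simps add_divide_distrib)
        also have "\<dots> = 1 + \<epsilon>" using Psum[OF i] Qsum[OF i] Ep by simp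
        finally show "x i (-1) * (Q i 1 * z i + Q i (-1)) = 1 + \<epsilon>" .
      qed
      finally have "W * Gs \<le> ((1 + \<epsilon>) ^ card U) powr \<alpha>"
        using GsR W0 mult_left_mono by fastforce
      then have Zle: "(\<Sum>\<sigma>\<in>X. p \<sigma> * h \<sigma>) \<le> ((1 + \<epsilon>) ^ card U) powr \<alpha>" using Zeq by simp
      have Zpos: "0 < (\<Sum>\<sigma>\<in>X. p \<sigma> * h \<sigma>)"
        using X y py hpos p by (intro sum_pos2[of X y]) (auto intro: mult_nonneg_nonneg less_imp_le)
      have "ln (\<Sum>\<sigma>\<in>X. p \<sigma> * h \<sigma>) \<le> ln (((1 + \<epsilon>) ^ card U) powr \<alpha>)"
        using Zle Zpos by (intro ln_mono) auto
      also have "\<dots> = \<alpha> * (real (card U) * ln (1 + \<epsilon>))"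
        using ep by (simp add: ln_realpow)
      also have "\<dots> \<le> \<alpha> * (real (card U) * \<epsilon>)"
        using a ep ln_add_one_self_le_self[of \<epsilon>] by (intro mult_left_mono) auto
      finally have lnZ: "E * ln (\<Sum>\<sigma>\<in>X. p \<sigma> * h \<sigma>) \<le> K * \<epsilon>"
        unfolding K_def using Ep by (simp add: mult_left_mono mult.assoc)
      have lnh: "ln (h \<sigma>) = \<alpha> * (\<Sum>i\<in>U. ln (x i (\<sigma> i)))" for \<sigma>
        unfolding h_def using U xpos by (subst ln_prod) (auto simp: sum_distrib_left less_imp_neq[symmetric])
      have site: "(\<Sum>\<sigma>\<in>X. p \<sigma> * f \<sigma> * ln (x i (\<sigma> i))) = P i 1 * ln (x i 1) + P i (-1) * ln (x i (-1))"
        if i: "i \<in> U" for i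
      proof -
        have "(\<Sum>\<sigma>\<in>X. p \<sigma> * f \<sigma> * ln (x i (\<sigma> i)))
           = (\<Sum>\<sigma>\<in>X. (if \<sigma> i = 1 then p \<sigma> * f \<sigma> else 0) * ln (x i 1) + (if \<sigma> i = -1 then p \<sigma> * f \<sigma> else 0) * ln (x i (-1)))"
          using coord i by (intro sum.cong) auto
        then show ?thesis unfolding P_def by (simp add: sum.distrib sum_distrib_right)
      qed
      have "(\<Sum>\<sigma>\<in>X. p \<sigma> * f \<sigma> * ln (h \<sigma>)) = \<alpha> * (\<Sum>i\<in>U. \<Sum>\<sigma>\<in>X. p \<sigma> * f \<sigma> * ln (x i (\<sigma> i)))"
        unfolding lnh by (simp add: sum_distrib_left sum.swap[of _ U] mult.assoc mult.left_commute)
      also have "\<dots> = \<alpha> * (\<Sum>i\<in>U. P i 1 * ln (x i 1) + P i (-1) * ln (x i (-1)))"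
        using site by simp
      finally have LHSeq: "(\<Sum>\<sigma>\<in>X. p \<sigma> * f \<sigma> * ln (h \<sigma>)) = \<alpha> * (\<Sum>i\<in>U. P i 1 * ln (x i 1) + P i (-1) * ln (x i (-1)))" .
      have D: "psi (P i s) (Q i s) - P i s * ln E \<le> P i s * ln (x i s)" for i s
      proof (cases "P i s = 0")
        case True then show ?thesis by simp
      next
        case False
        then have Pp: "P i s > 0" using Pnn[of i s] by simp
        have Qp: "Q i s > 0" using Q0[of i s] Qnn[of i s] False by fastforce
        have "P i s / E \<le> P i s / E + \<epsilon> * Q i s" using Qp ep by simp
        then have "P i s / E / Q i s \<le> (P i s / E + \<epsilon> * Q i s) / Q i s" using Qp
          by (intro divide_right_mono) auto
        then have xge: "P i s / E / Q i s \<le> x i s" unfolding x_def using Qp by simp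
        have "ln (P i s / E / Q i s) \<le> ln (x i s)" using xge Pp Ep Qp by (intro ln_mono) auto
        moreover have "ln (P i s / E / Q i s) = ln (P i s / Q i s) - ln E"
          using Pp Ep Qp by (simp add: ln_div ln_mult)
        ultimately have "ln (P i s / Q i s) - ln E \<le> ln (x i s)" by simp
        then have "P i s * (ln (P i s / Q i s) - ln E) \<le> P i s * ln (x i s)"
          using Pp by (intro mult_left_mono) auto
        then show ?thesis using Qp by (simp add: psi_eq right_diff_distrib)
      qed
      have "(\<Sum>i\<in>U. psi (P i 1) (Q i 1) + psi (P i (-1)) (Q i (-1)) - xlogx E)
          \<le> (\<Sum>i\<in>U. P i 1 * ln (x i 1) + P i (-1) * ln (x i (-1)))"
      proof (intro sum_mono)
        fix i assume i: "i \<in> U"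
        have "xlogx E = P i 1 * ln E + P i (-1) * ln E" using Psum[OF i]
          by (simp add: xlogx_eq distrib_right[symmetric])
        then show "psi (P i 1) (Q i 1) + psi (P i (-1)) (Q i (-1)) - xlogx E
             \<le> P i 1 * ln (x i 1) + P i (-1) * ln (x i (-1))"
          using D[of i 1] D[of i "-1"] by linarith
      qed
      then have "\<alpha> * (\<Sum>i\<in>U. psi (P i 1) (Q i 1) + psi (P i (-1)) (Q i (-1)) - xlogx E)
          \<le> \<alpha> * (\<Sum>i\<in>U. P i 1 * ln (x i 1) + P i (-1) * ln (x i (-1)))"
        using a by (intro mult_left_mono) auto
      also have "\<dots> \<le> (\<Sum>\<sigma>\<in>X. p \<sigma> * xlogx (f \<sigma>)) - xlogx E + K * \<epsilon>"
        using G LHSeq lnZ by linarith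
      finally show "\<alpha> * (\<Sum>i\<in>U. psi (P i 1) (Q i 1) + psi (P i (-1)) (Q i (-1)) - xlogx E)
          \<le> (\<Sum>\<sigma>\<in>X. p \<sigma> * xlogx (f \<sigma>)) - xlogx E + e" using Ke by linarith
    qed
  qed
  then show ?thesis unfolding P_def E_def .
qed




definition AA :: "nat set \<Rightarrow> ((nat \<Rightarrow> int) \<Rightarrow> real) \<Rightarrow> ((nat \<Rightarrow> int) \<Rightarrow> real) \<Rightarrow> nat set \<Rightarrow> real" where
  "AA N \<mu> f T = (\<Sum>\<tau>\<in>cube T. psi (marg N (\<lambda>\<sigma>. \<mu> \<sigma> * f \<sigma>) T \<tau>) (marg N \<mu> T \<tau>))"

lemma fiber_zero:
  assumes "finite N" "\<forall>\<sigma>. 0 \<le> \<mu> \<sigma>" "marg N \<mu> T \<tau> = 0"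
  shows "\<forall>\<sigma>\<in>cube N. restrict \<sigma> T = \<tau> \<longrightarrow> \<mu> \<sigma> = 0"
proof -
  have "\<forall>\<sigma>\<in>cube N. (if restrict \<sigma> T = \<tau> then \<mu> \<sigma> else 0) = 0"
    using assms unfolding marg_def by (subst sum_nonneg_eq_0_iff[symmetric]) auto
  then show ?thesis by (metis (full_types))
qed

lemma marg_zero_mult:
  assumes "finite N" "\<forall>\<sigma>. 0 \<le> \<mu> \<sigma>" "marg N \<mu> T \<tau> = 0"
  shows "marg N (\<lambda>\<sigma>. \<mu> \<sigma> * g \<sigma>) T \<tau> = 0"
  using fiber_zero[OF assms] unfolding marg_def by (intro sum.neutral) auto

lemma marg_nonneg: "\<forall>\<sigma>. 0 \<le> \<mu> \<sigma> \<Longrightarrow> 0 \<le> marg N \<mu> T \<tau>"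
  unfolding marg_def by (intro sum_nonneg) auto

lemma expect_cond:
  "expect N (cond N \<mu> T \<tau>) g = marg N (\<lambda>\<sigma>. \<mu> \<sigma> * g \<sigma>) T \<tau> / marg N \<mu> T \<tau>"
  unfolding expect_def cond_def marg_def
  by (simp add: sum_divide_distrib if_distrib cong: if_cong) (intro sum.cong refl, auto)

lemma AA_full:
  assumes "finite N" "\<forall>\<sigma>. 0 \<le> \<mu> \<sigma>"
  shows "AA N \<mu> f N = (\<Sum>\<sigma>\<in>cube N. \<mu> \<sigma> * xlogx (f \<sigma>))"
  unfolding AA_def using assms by (intro sum.cong refl) (simp add: marg_full psi_def)

lemma AA_GG:
  assumes "finite N" "T \<subseteq> N"
  shows "(\<Sum>\<sigma>\<in>cube N. \<mu> \<sigma> * xlogx (f \<sigma>)) = (\<Sum>\<tau>\<in>cube T. marg N (\<lambda>\<sigma>. \<mu> \<sigma> * xlogx (f \<sigma>)) T \<tau>)"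
  using sum_marg1[OF assms] by simp

lemma AA_empty:
  assumes "sum \<mu> (cube N) = 1"
  shows "AA N \<mu> f {} = xlogx (expect N \<mu> f)"
  unfolding AA_def cube_empty using assms by (simp add: marg_empty psi_def expect_def)

lemma block_term:
  assumes "finite N" "\<forall>\<sigma>. 0 \<le> \<mu> \<sigma>"
  shows "marg N \<mu> T \<tau> * Ent N (cond N \<mu> T \<tau>) f
       = marg N (\<lambda>\<sigma>. \<mu> \<sigma> * xlogx (f \<sigma>)) T \<tau> - psi (marg N (\<lambda>\<sigma>. \<mu> \<sigma> * f \<sigma>) T \<tau>) (marg N \<mu> T \<tau>)"
proof (cases "marg N \<mu> T \<tau> = 0")
  case True
  then show ?thesis using marg_zero_mult[OF assms True] by simp
next
  case False
  then show ?thesis unfolding Ent_def expect_cond psi_def by (simp add: right_diff_distrib)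
qed

lemma block_ent_AA:
  assumes "is_dist {0..<n} \<mu>" "B \<subseteq> {0..<n}"
  shows "block_ent n \<mu> B f = AA {0..<n} \<mu> f {0..<n} - AA {0..<n} \<mu> f ({0..<n} - B)"
proof -
  define N where "N = {0..<n}"
  define T where "T = N - B"
  have fN: "finite N" and TN: "T \<subseteq> N" unfolding N_def T_def by auto
  have mu: "\<forall>\<sigma>. 0 \<le> \<mu> \<sigma>" using assms(1) unfolding is_dist_def by simp
  have "block_ent n \<mu> B f = (\<Sum>\<tau>\<in>supp T (marg N \<mu> T). marg N (\<lambda>\<sigma>. \<mu> \<sigma> * xlogx (f \<sigma>)) T \<tau> - psi (marg N (\<lambda>\<sigma>. \<mu> \<sigma> * f \<sigma>) T \<tau>) (marg N \<mu> T \<tau>))"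
    unfolding block_ent_def N_def[symmetric] T_def[symmetric] using block_term[OF fN mu] by simp
  also have "\<dots> = (\<Sum>\<tau>\<in>cube T. marg N (\<lambda>\<sigma>. \<mu> \<sigma> * xlogx (f \<sigma>)) T \<tau> - psi (marg N (\<lambda>\<sigma>. \<mu> \<sigma> * f \<sigma>) T \<tau>) (marg N \<mu> T \<tau>))"
  proof (rule sum.mono_neutral_left)
    show "finite (cube T)" using fN TN by (meson finite_cube finite_subset)
    show "supp T (marg N \<mu> T) \<subseteq> cube T" unfolding supp_def by auto
    show "\<forall>\<tau>\<in>cube T - supp T (marg N \<mu> T). marg N (\<lambda>\<sigma>. \<mu> \<sigma> * xlogx (f \<sigma>)) T \<tau> - psi (marg N (\<lambda>\<sigma>. \<mu> \<sigma> * f \<sigma>) T \<tau>) (marg N \<mu> T \<tau>) = 0"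
      unfolding supp_def using marg_zero_mult[OF fN mu] by auto
  qed
  also have "\<dots> = AA N \<mu> f N - AA N \<mu> f T"
  proof -
    have "AA N \<mu> f N = (\<Sum>\<tau>\<in>cube T. marg N (\<lambda>\<sigma>. \<mu> \<sigma> * xlogx (f \<sigma>)) T \<tau>)"
      using AA_full[OF fN mu] AA_GG[OF fN TN] by simp
    then show ?thesis by (simp add: AA_def sum_subtractf)
  qed
  finally show ?thesis unfolding N_def T_def .
qed




lemma restrict_insert_eq:
  assumes "\<tau> \<in> cube T" "i \<notin> T"
  shows "restrict \<sigma> (insert i T) = \<tau>(i:=s) \<longleftrightarrow> restrict \<sigma> T = \<tau> \<and> \<sigma> i = s"
proof
  assume h: "restrict \<sigma> (insert i T) = \<tau>(i:=s)"
  have "\<sigma> i = s" using fun_cong[OF h, of i] by simp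
  moreover have "restrict \<sigma> T = \<tau>"
  proof
    fix x show "restrict \<sigma> T x = \<tau> x"
      using fun_cong[OF h, of x] assms unfolding cube_def
      by (cases "x \<in> T") (auto simp: PiE_def extensional_def)
  qed
  ultimately show "restrict \<sigma> T = \<tau> \<and> \<sigma> i = s" by simp
next
  assume h: "restrict \<sigma> T = \<tau> \<and> \<sigma> i = s"
  show "restrict \<sigma> (insert i T) = \<tau>(i:=s)"
  proof
    fix x show "restrict \<sigma> (insert i T) x = (\<tau>(i:=s)) x"
      using h fun_cong[OF conjunct1[OF h], of x] assms unfolding cube_def
      by (cases "x \<in> T") (auto simp: PiE_def extensional_def)
  qed
qed

lemma sum_cube_insert:
  fixes G :: "(nat \<Rightarrow> int) \<Rightarrow> real"
  assumes "finite T" "i \<notin> T"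
  shows "(\<Sum>\<eta>\<in>cube (insert i T). G \<eta>) = (\<Sum>\<tau>\<in>cube T. G (\<tau>(i:=1)) + G (\<tau>(i:=-1)))"
proof -
  have eq: "cube (insert i T) = (\<lambda>(y, g). g(i := y)) ` ({-1,1} \<times> cube T)"
    unfolding cube_def by (rule PiE_insert_eq)
  have inj: "inj_on (\<lambda>(y, g). g(i := y)) ({-1,1} \<times> cube T)"
    unfolding cube_def using inj_combinator[OF assms(2), of "\<lambda>_. {-1::int,1}"] by simp
  have "(\<Sum>\<eta>\<in>cube (insert i T). G \<eta>) = (\<Sum>(y,g)\<in>{-1,1} \<times> cube T. G (g(i:=y)))"
    unfolding eq by (subst sum.reindex[OF inj]) (simp add: case_prod_unfold)
  also have "\<dots> = (\<Sum>y\<in>{-1,1}. \<Sum>g\<in>cube T. G (g(i:=y)))"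
    by (rule sum.cartesian_product[symmetric])
  also have "\<dots> = (\<Sum>g\<in>cube T. G (g(i:=-1))) + (\<Sum>g\<in>cube T. G (g(i:=1)))" by simp
  finally show ?thesis by (simp add: sum.distrib)
qed

lemma marg_insert:
  assumes "\<tau> \<in> cube T" "i \<notin> T"
  shows "marg N w (insert i T) (\<tau>(i:=s)) = (\<Sum>\<sigma>\<in>cube N. if restrict \<sigma> T = \<tau> \<and> \<sigma> i = s then w \<sigma> else 0)"
  unfolding marg_def using restrict_insert_eq[OF assms] by simp

lemma cond_mult:
  assumes "\<sigma> \<in> cube N" "marg N \<mu> T \<tau> \<noteq> 0"
  shows "marg N \<mu> T \<tau> * cond N \<mu> T \<tau> \<sigma> = (if restrict \<sigma> T = \<tau> then \<mu> \<sigma> else 0)"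
  unfolding cond_def using assms by simp




lemma local_tau:
  fixes N T :: "nat set" and \<mu> f :: "(nat \<Rightarrow> int) \<Rightarrow> real" and \<tau> :: "nat \<Rightarrow> int"
  assumes fN: "finite N" and TN: "T \<subseteq> N" and mu: "\<forall>\<sigma>. 0 \<le> \<mu> \<sigma>"
    and f: "\<forall>\<sigma>\<in>cube N. \<mu> \<sigma> \<noteq> 0 \<longrightarrow> 0 \<le> f \<sigma>" and a: "0 < \<alpha>"
    and tau: "\<tau> \<in> cube T"
    and PD: "marg N \<mu> T \<tau> \<noteq> 0 \<Longrightarrow> product_dominated (N - T) (marg N (cond N \<mu> T \<tau>) (N - T)) (1/\<alpha>)"
  shows "\<alpha> * ((\<Sum>i\<in>N - T. psi (marg N (\<lambda>\<sigma>. \<mu> \<sigma> * f \<sigma>) (insert i T) (\<tau>(i:=1))) (marg N \<mu> (insert i T) (\<tau>(i:=1)))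
                   + psi (marg N (\<lambda>\<sigma>. \<mu> \<sigma> * f \<sigma>) (insert i T) (\<tau>(i:=-1))) (marg N \<mu> (insert i T) (\<tau>(i:=-1))))
              - real (card (N - T)) * psi (marg N (\<lambda>\<sigma>. \<mu> \<sigma> * f \<sigma>) T \<tau>) (marg N \<mu> T \<tau>))
         \<le> marg N (\<lambda>\<sigma>. \<mu> \<sigma> * xlogx (f \<sigma>)) T \<tau> - psi (marg N (\<lambda>\<sigma>. \<mu> \<sigma> * f \<sigma>) T \<tau>) (marg N \<mu> T \<tau>)"
proof -
  define U where "U = N - T"
  define M where "M = marg N \<mu> T \<tau>"
  have fU: "finite U" unfolding U_def using fN by simp
  have UN: "U \<subseteq> N" unfolding U_def by auto
  have iT: "i \<notin> T" if "i \<in> U" for i using that unfolding U_def by auto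
  have M0: "0 \<le> M" unfolding M_def using mu by (rule marg_nonneg)
  have main: "\<alpha> * ((\<Sum>i\<in>U. psi (marg N (\<lambda>\<sigma>. \<mu> \<sigma> * f \<sigma>) (insert i T) (\<tau>(i:=1))) (marg N \<mu> (insert i T) (\<tau>(i:=1)))
                   + psi (marg N (\<lambda>\<sigma>. \<mu> \<sigma> * f \<sigma>) (insert i T) (\<tau>(i:=-1))) (marg N \<mu> (insert i T) (\<tau>(i:=-1))))
              - real (card U) * psi (marg N (\<lambda>\<sigma>. \<mu> \<sigma> * f \<sigma>) T \<tau>) M)
         \<le> marg N (\<lambda>\<sigma>. \<mu> \<sigma> * xlogx (f \<sigma>)) T \<tau> - psi (marg N (\<lambda>\<sigma>. \<mu> \<sigma> * f \<sigma>) T \<tau>) M"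
  proof (cases "M = 0")
    case True
    have z1: "marg N \<mu> (insert i T) (\<tau>(i:=s)) = 0" if "i \<in> U" for i s
      unfolding marg_insert[OF tau iT[OF that]] using fiber_zero[OF fN mu True[unfolded M_def]]
      by (intro sum.neutral) auto
    have z2: "marg N (\<lambda>\<sigma>. \<mu> \<sigma> * xlogx (f \<sigma>)) T \<tau> = 0"
      using marg_zero_mult[OF fN mu True[unfolded M_def]] .
    show ?thesis using z1 z2 True by simp
  next
    case False
    then have Mp: "M > 0" using M0 by simp
    define p where "p = cond N \<mu> T \<tau>"
    define Q where "Q i s = (\<Sum>x\<in>cube N. if x i = s then p x else 0)" for i s
    have Mp_eq: "M * p \<sigma> = (if restrict \<sigma> T = \<tau> then \<mu> \<sigma> else 0)" if "\<sigma> \<in> cube N" for \<sigma>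
      unfolding M_def p_def using cond_mult[OF that] False M_def by simp
    have pnn: "\<forall>x\<in>cube N. 0 \<le> p x"
    proof
      fix x assume x: "x \<in> cube N"
      have "0 \<le> M * p x" using Mp_eq[OF x] mu by simp
      then show "0 \<le> p x" using Mp by (simp add: zero_le_mult_iff)
    qed
    have p1: "sum p (cube N) = 1"
    proof -
      have "M * sum p (cube N) = (\<Sum>x\<in>cube N. M * p x)" by (simp add: sum_distrib_left)
      also have "\<dots> = M" using Mp_eq unfolding M_def marg_def by (intro sum.cong) auto
      finally show ?thesis using Mp by simp
    qed
    have fp: "\<forall>x\<in>cube N. 0 < p x \<longrightarrow> 0 \<le> f x"
    proof (intro ballI impI)
      fix x assume x: "x \<in> cube N" and "0 < p x"
      then have "M * p x \<noteq> 0" using Mp by simp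
      then have "\<mu> x \<noteq> 0" using Mp_eq[OF x] by (auto split: if_splits)
      then show "0 \<le> f x" using f x by simp
    qed
    have coord: "\<forall>x\<in>cube N. \<forall>i\<in>U. x i = 1 \<or> x i = -1"
      using UN unfolding cube_def by (auto simp: PiE_def Pi_def)
    have PDx: "\<forall>z. (\<forall>i\<in>U. 0 < z i) \<longrightarrow>
       (\<Sum>x\<in>cube N. p x * (\<Prod>i\<in>{i\<in>U. x i = 1}. z i powr \<alpha>)) powr (1/\<alpha>) \<le> (\<Prod>i\<in>U. Q i 1 * z i + Q i (-1))"
    proof (intro allI impI)
      fix z :: "nat \<Rightarrow> real" assume z: "\<forall>i\<in>U. 0 < z i"
      have pd: "product_dominated U (marg N p U) (1/\<alpha>)" using PD False unfolding U_def M_def p_def by simp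
      have gp: "gen_poly U (marg N p U) y = (\<Sum>x\<in>cube N. p x * (\<Prod>i\<in>{i\<in>U. x i = 1}. y i))" for y
      proof -
        have "gen_poly U (marg N p U) y = (\<Sum>x\<in>cube N. p x * (\<Prod>i\<in>{i\<in>U. restrict x U i = 1}. y i))"
          unfolding gen_poly_def by (rule sum_marg[OF fN UN])
        also have "\<dots> = (\<Sum>x\<in>cube N. p x * (\<Prod>i\<in>{i\<in>U. x i = 1}. y i))"
          by (intro sum.cong refl arg_cong2[where f="(*)"] prod.cong) auto
        finally show ?thesis .
      qed
      have sp: "site_prob U (marg N p U) i s = Q i s" if "i \<in> U" for i s
      proof -
        have "site_prob U (marg N p U) i s = (\<Sum>\<eta>\<in>cube U. marg N p U \<eta> * (if \<eta> i = s then 1 else 0))"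
          unfolding site_prob_def by (intro sum.cong) auto
        also have "\<dots> = (\<Sum>x\<in>cube N. p x * (if restrict x U i = s then 1 else 0))"
          by (rule sum_marg[OF fN UN])
        also have "\<dots> = Q i s" unfolding Q_def using that by (intro sum.cong) auto
        finally show ?thesis .
      qed
      have "gen_poly U (marg N p U) (\<lambda>i. z i powr (1 / (1/\<alpha>))) powr (1/\<alpha>)
             \<le> (\<Prod>i\<in>U. site_prob U (marg N p U) i 1 * z i + site_prob U (marg N p U) i (-1))"
        using pd z unfolding product_dominated_def by blast
      also have "\<dots> = (\<Prod>i\<in>U. Q i 1 * z i + Q i (-1))" using sp by (intro prod.cong) auto
      finally show "(\<Sum>x\<in>cube N. p x * (\<Prod>i\<in>{i\<in>U. x i = 1}. z i powr \<alpha>)) powr (1/\<alpha>) \<le> (\<Prod>i\<in>U. Q i 1 * z i + Q i (-1))"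
        unfolding gp by simp
    qed
    have L: "\<alpha> * (\<Sum>i\<in>U. psi (\<Sum>x\<in>cube N. if x i = 1 then p x * f x else 0) (Q i 1)
                    + psi (\<Sum>x\<in>cube N. if x i = -1 then p x * f x else 0) (Q i (-1))
                    - xlogx (\<Sum>x\<in>cube N. p x * f x))
         \<le> (\<Sum>x\<in>cube N. p x * xlogx (f x)) - xlogx (\<Sum>x\<in>cube N. p x * f x)"
      by (rule local_ei[OF finite_cube[OF fN] fU pnn p1 fp coord a PDx Q_def])
    define E where "E = (\<Sum>x\<in>cube N. p x * f x)"
    have MQ: "M * Q i s = marg N \<mu> (insert i T) (\<tau>(i:=s))" if "i \<in> U" for i s
    proof -
      have "M * Q i s = (\<Sum>x\<in>cube N. if x i = s then M * p x else 0)"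
        unfolding Q_def sum_distrib_left by (intro sum.cong) auto
      also have "\<dots> = marg N \<mu> (insert i T) (\<tau>(i:=s))"
        unfolding marg_insert[OF tau iT[OF that]] using Mp_eq by (intro sum.cong) auto
      finally show ?thesis .
    qed
    have MP: "M * (\<Sum>x\<in>cube N. if x i = s then p x * f x else 0) = marg N (\<lambda>\<sigma>. \<mu> \<sigma> * f \<sigma>) (insert i T) (\<tau>(i:=s))"
      if "i \<in> U" for i s
    proof -
      have "M * (\<Sum>x\<in>cube N. if x i = s then p x * f x else 0) = (\<Sum>x\<in>cube N. if x i = s then (M * p x) * f x else 0)"
        unfolding sum_distrib_left by (intro sum.cong) auto
      also have "\<dots> = marg N (\<lambda>\<sigma>. \<mu> \<sigma> * f \<sigma>) (insert i T) (\<tau>(i:=s))"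
        unfolding marg_insert[OF tau iT[OF that]] using Mp_eq by (intro sum.cong) auto
      finally show ?thesis .
    qed
    have ME: "M * E = marg N (\<lambda>\<sigma>. \<mu> \<sigma> * f \<sigma>) T \<tau>"
    proof -
      have "M * E = (\<Sum>x\<in>cube N. (M * p x) * f x)" unfolding E_def sum_distrib_left by (simp add: mult.assoc)
      also have "\<dots> = marg N (\<lambda>\<sigma>. \<mu> \<sigma> * f \<sigma>) T \<tau>" unfolding marg_def using Mp_eq by (intro sum.cong) auto
      finally show ?thesis .
    qed
    have MG: "M * (\<Sum>x\<in>cube N. p x * xlogx (f x)) = marg N (\<lambda>\<sigma>. \<mu> \<sigma> * xlogx (f \<sigma>)) T \<tau>"
    proof -
      have "M * (\<Sum>x\<in>cube N. p x * xlogx (f x)) = (\<Sum>x\<in>cube N. (M * p x) * xlogx (f x))"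
        unfolding sum_distrib_left by (simp add: mult.assoc)
      also have "\<dots> = marg N (\<lambda>\<sigma>. \<mu> \<sigma> * xlogx (f \<sigma>)) T \<tau>" unfolding marg_def using Mp_eq by (intro sum.cong) auto
      finally show ?thesis .
    qed
    have MX: "M * xlogx E = psi (marg N (\<lambda>\<sigma>. \<mu> \<sigma> * f \<sigma>) T \<tau>) M"
    proof -
      have "psi (marg N (\<lambda>\<sigma>. \<mu> \<sigma> * f \<sigma>) T \<tau>) M = psi (M * E) (M * 1)" using ME by simp
      also have "\<dots> = M * xlogx E" using psi_scale[OF Mp] by (simp add: psi_def)
      finally show ?thesis by simp
    qed
    have Mpsi: "M * psi (\<Sum>x\<in>cube N. if x i = s then p x * f x else 0) (Q i s)
        = psi (marg N (\<lambda>\<sigma>. \<mu> \<sigma> * f \<sigma>) (insert i T) (\<tau>(i:=s))) (marg N \<mu> (insert i T) (\<tau>(i:=s)))"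
      if "i \<in> U" for i s
      unfolding MP[OF that, symmetric] MQ[OF that, symmetric] by (rule psi_scale[OF Mp, symmetric])
    have A1: "M * (\<alpha> * (\<Sum>i\<in>U. psi (\<Sum>x\<in>cube N. if x i = 1 then p x * f x else 0) (Q i 1)
                    + psi (\<Sum>x\<in>cube N. if x i = -1 then p x * f x else 0) (Q i (-1))
                    - xlogx E))
         \<le> M * ((\<Sum>x\<in>cube N. p x * xlogx (f x)) - xlogx E)"
      using L Mp unfolding E_def by (intro mult_left_mono) auto
    moreover have MS: "M * (\<Sum>i\<in>U. psi (\<Sum>x\<in>cube N. if x i = 1 then p x * f x else 0) (Q i 1)
                    + psi (\<Sum>x\<in>cube N. if x i = -1 then p x * f x else 0) (Q i (-1))
                    - xlogx E)
        = (\<Sum>i\<in>U. psi (marg N (\<lambda>\<sigma>. \<mu> \<sigma> * f \<sigma>) (insert i T) (\<tau>(i:=1))) (marg N \<mu> (insert i T) (\<tau>(i:=1)))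
                   + psi (marg N (\<lambda>\<sigma>. \<mu> \<sigma> * f \<sigma>) (insert i T) (\<tau>(i:=-1))) (marg N \<mu> (insert i T) (\<tau>(i:=-1))))
              - real (card U) * psi (marg N (\<lambda>\<sigma>. \<mu> \<sigma> * f \<sigma>) T \<tau>) M"
    proof -
      have "M * (\<Sum>i\<in>U. psi (\<Sum>x\<in>cube N. if x i = 1 then p x * f x else 0) (Q i 1)
                    + psi (\<Sum>x\<in>cube N. if x i = -1 then p x * f x else 0) (Q i (-1))
                    - xlogx E)
          = (\<Sum>i\<in>U. M * psi (\<Sum>x\<in>cube N. if x i = 1 then p x * f x else 0) (Q i 1)
                    + M * psi (\<Sum>x\<in>cube N. if x i = -1 then p x * f x else 0) (Q i (-1))
                    - M * xlogx E)"
        unfolding sum_distrib_left by (intro sum.cong refl) (simp add: ring_distribs)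
      also have "\<dots> = (\<Sum>i\<in>U. psi (marg N (\<lambda>\<sigma>. \<mu> \<sigma> * f \<sigma>) (insert i T) (\<tau>(i:=1))) (marg N \<mu> (insert i T) (\<tau>(i:=1)))
                   + psi (marg N (\<lambda>\<sigma>. \<mu> \<sigma> * f \<sigma>) (insert i T) (\<tau>(i:=-1))) (marg N \<mu> (insert i T) (\<tau>(i:=-1)))
                   - psi (marg N (\<lambda>\<sigma>. \<mu> \<sigma> * f \<sigma>) T \<tau>) M)"
        using Mpsi MX by (intro sum.cong) auto
      finally show ?thesis by (simp add: sum_subtractf)
    qed
    from A1 show ?thesis
      unfolding mult.left_commute[of M \<alpha>] MS right_diff_distrib[of M] MG MX .
  qed
  then show ?thesis unfolding U_def M_def .
qed




lemma local_cube:
  fixes N T :: "nat set" and \<mu> f :: "(nat \<Rightarrow> int) \<Rightarrow> real"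
  assumes fN: "finite N" and TN: "T \<subseteq> N" and mu: "\<forall>\<sigma>. 0 \<le> \<mu> \<sigma>"
    and f: "\<forall>\<sigma>\<in>cube N. \<mu> \<sigma> \<noteq> 0 \<longrightarrow> 0 \<le> f \<sigma>" and a: "0 < \<alpha>"
    and PD: "\<forall>\<tau>\<in>supp T (marg N \<mu> T). product_dominated (N - T) (marg N (cond N \<mu> T \<tau>) (N - T)) (1/\<alpha>)"
  shows "\<alpha> * ((\<Sum>i\<in>N - T. AA N \<mu> f (insert i T)) - real (card (N - T)) * AA N \<mu> f T) \<le> AA N \<mu> f N - AA N \<mu> f T"
proof -
  define F where "F T' \<eta> = psi (marg N (\<lambda>\<sigma>. \<mu> \<sigma> * f \<sigma>) T' \<eta>) (marg N \<mu> T' \<eta>)" for T' \<eta>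
  define GG where "GG \<tau> = marg N (\<lambda>\<sigma>. \<mu> \<sigma> * xlogx (f \<sigma>)) T \<tau>" for \<tau>
  have fT: "finite T" using fN TN finite_subset by blast
  have AAF: "AA N \<mu> f T' = (\<Sum>\<eta>\<in>cube T'. F T' \<eta>)" for T' unfolding AA_def F_def by simp
  have s1: "(\<Sum>i\<in>N - T. AA N \<mu> f (insert i T)) = (\<Sum>\<tau>\<in>cube T. \<Sum>i\<in>N - T. F (insert i T) (\<tau>(i:=1)) + F (insert i T) (\<tau>(i:=-1)))"
  proof -
    have "(\<Sum>i\<in>N - T. AA N \<mu> f (insert i T)) = (\<Sum>i\<in>N - T. \<Sum>\<tau>\<in>cube T. F (insert i T) (\<tau>(i:=1)) + F (insert i T) (\<tau>(i:=-1)))"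
    proof (intro sum.cong refl)
      fix i assume "i \<in> N - T"
      then show "AA N \<mu> f (insert i T) = (\<Sum>\<tau>\<in>cube T. F (insert i T) (\<tau>(i:=1)) + F (insert i T) (\<tau>(i:=-1)))"
        unfolding AAF by (intro sum_cube_insert[OF fT]) auto
    qed
    then show ?thesis by (simp add: sum.swap[of _ "N - T"])
  qed
  have s2: "AA N \<mu> f N = (\<Sum>\<tau>\<in>cube T. GG \<tau>)" unfolding GG_def using AA_full[OF fN mu] AA_GG[OF fN TN] by simp
  have pt: "\<alpha> * ((\<Sum>i\<in>N - T. F (insert i T) (\<tau>(i:=1)) + F (insert i T) (\<tau>(i:=-1))) - real (card (N - T)) * F T \<tau>)
            \<le> GG \<tau> - F T \<tau>" if tau: "\<tau> \<in> cube T" for \<tau>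
    unfolding F_def GG_def
    by (rule local_tau[OF fN TN mu f a tau]) (use PD tau in \<open>auto simp: supp_def\<close>)
  have "\<alpha> * ((\<Sum>i\<in>N - T. AA N \<mu> f (insert i T)) - real (card (N - T)) * AA N \<mu> f T)
      = (\<Sum>\<tau>\<in>cube T. \<alpha> * ((\<Sum>i\<in>N - T. F (insert i T) (\<tau>(i:=1)) + F (insert i T) (\<tau>(i:=-1))) - real (card (N - T)) * F T \<tau>))"
    unfolding s1 AAF[of T] sum_distrib_left[of "real (card (N - T))"] sum_subtractf[symmetric]
      sum_distrib_left[of \<alpha>] ..
  also have "\<dots> \<le> (\<Sum>\<tau>\<in>cube T. GG \<tau> - F T \<tau>)" using pt by (rule sum_mono)
  also have "\<dots> = AA N \<mu> f N - AA N \<mu> f T" unfolding s2 AAF[of T] by (simp add: sum_subtractf)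
  finally show ?thesis .
qed




lemma pow_over_fact_le_exp:
  fixes x :: real assumes "0 \<le> x"
  shows "x ^ r / fact r \<le> exp x"
proof -
  have s: "summable (\<lambda>n. x^n /\<^sub>R fact n)" using exp_converges sums_summable by blast
  have "sum (\<lambda>n. x^n /\<^sub>R fact n) {r} \<le> suminf (\<lambda>n. x^n /\<^sub>R fact n)"
    by (rule sum_le_suminf[OF s]) (use assms in auto)
  also have "suminf (\<lambda>n. x^n /\<^sub>R fact n) = exp x" using exp_converges sums_unique by metis
  finally show ?thesis by (simp add: divide_inverse_commute)
qed

lemma fact_ge_pow: "(real r / exp 1) ^ r \<le> fact r"
proof -
  have "real r ^ r / fact r \<le> exp (real r)" by (rule pow_over_fact_le_exp) simp
  then have "real r ^ r \<le> exp (real r) * fact r" by (simp add: divide_le_eq)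
  moreover have "exp (real r) = exp 1 ^ r" by (metis exp_of_nat_mult mult.right_neutral)
  ultimately show ?thesis by (simp add: power_divide divide_le_eq mult.commute)
qed

lemma binom_ratio_ge:
  assumes "1 \<le> r" "r \<le> l" "l \<le> m"
  shows "(real l / (exp 1 * real m)) ^ r \<le> real (l choose r) / real (m choose r)"
proof -
  have mpos: "real m > 0" using assms by simp
  have rpos: "real r > 0" using assms by simp
  have c1: "(real l / real r) ^ r \<le> real (l choose r)"
    using binomial_ge_n_over_k_pow_k[of r l] assms by simp
  have c2: "real (m choose r) * fact r \<le> real m ^ r"
    using binomial_fact_pow[of m r] by (metis of_nat_fact of_nat_le_iff of_nat_mult of_nat_power)
  have mr: "real (m choose r) > 0" using assms by simp
  have "(real l / (exp 1 * real m)) ^ r = (real l / real r) ^ r * (real r / exp 1) ^ r / real m ^ r"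
    using rpos by (simp add: power_divide power_mult_distrib field_simps)
  also have "\<dots> \<le> real (l choose r) * fact r / real m ^ r"
    using c1 fact_ge_pow[of r] by (intro divide_right_mono mult_mono) auto
  also have "\<dots> \<le> real (l choose r) * fact r / (real (m choose r) * fact r)"
    using c2 mr by (intro divide_left_mono mult_pos_pos) auto
  also have "\<dots> = real (l choose r) / real (m choose r)" by simp
  finally show ?thesis .
qed

lemma prod_ratio_ge:
  fixes c :: real
  assumes "0 < c" "c \<le> real l" "l \<le> m"
  shows "real (l choose (nat \<lceil>c\<rceil>)) / real (m choose (nat \<lceil>c\<rceil>)) \<le> (\<Prod>j\<in>{l<..m}. 1 - c / real j)"
  using assms(3)
proof (induction m rule: dec_induct)
  case base
  have "nat \<lceil>c\<rceil> \<le> l" using assms by linarith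
  then show ?case by simp
next
  case (step m)
  define r where "r = nat \<lceil>c\<rceil>"
  have rl: "r \<le> l" unfolding r_def using assms by linarith
  have rc: "c \<le> real r" unfolding r_def by linarith
  have eq: "{l<..Suc m} = insert (Suc m) {l<..m}" using step.hyps by auto
  have f1: "real (Suc m - r) / real (Suc m) \<le> 1 - c / real (Suc m)"
  proof -
    have "r \<le> Suc m" using rl step.hyps by simp
    then have "real (Suc m - r) / real (Suc m) = 1 - real r / real (Suc m)"
      by (simp add: of_nat_diff diff_divide_distrib)
    moreover have "c / real (Suc m) \<le> real r / real (Suc m)" using rc by (simp add: divide_right_mono)
    ultimately show ?thesis by simp
  qed
  have f0: "0 \<le> real (Suc m - r) / real (Suc m)" by simp
  have mc: "real (m choose r) > 0" using rl step.hyps by simp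
  have absorb: "real (Suc m - r) * real (Suc m choose r) = real (Suc m) * real (m choose r)"
    using binomial_absorb_comp[of "Suc m" r] by (metis diff_Suc_1 of_nat_mult)
  have "real (l choose r) / real (Suc m choose r) = real (Suc m - r) / real (Suc m) * (real (l choose r) / real (m choose r))"
  proof -
    have smc: "real (Suc m choose r) > 0" using rl step.hyps by simp
    have a0: "real (Suc m - r) > 0" using rl step.hyps by simp
    have "real (l choose r) / real (Suc m choose r) = (real (Suc m - r) * real (l choose r)) / (real (Suc m - r) * real (Suc m choose r))"
      using a0 by simp
    also have "\<dots> = (real (Suc m - r) * real (l choose r)) / (real (Suc m) * real (m choose r))" using absorb by simp
    also have "\<dots> = real (Suc m - r) / real (Suc m) * (real (l choose r) / real (m choose r))" by simp
    finally show ?thesis .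
  qed
  also have "\<dots> \<le> (1 - c / real (Suc m)) * (\<Prod>j\<in>{l<..m}. 1 - c / real j)"
  proof -
    have "c \<le> 1 + real m" using assms step.hyps by linarith
    then show ?thesis
      using step.IH f1 f0 unfolding r_def[symmetric] by (intro mult_mono) auto
  qed
  also have "\<dots> = (\<Prod>j\<in>{l<..Suc m}. 1 - c / real j)" unfolding eq by simp
  finally show ?case unfolding r_def .
qed

lemma prod_bound:
  fixes c :: real
  assumes "0 < c" "c \<le> real l" "l \<le> m"
  shows "(real l / (exp 1 * real m)) powr (c + 1) \<le> (\<Prod>j\<in>{l<..m}. 1 - c / real j)"
proof -
  define r where "r = nat \<lceil>c\<rceil>"
  have r1: "1 \<le> r" unfolding r_def using assms by linarith
  have rl: "r \<le> l" unfolding r_def using assms by linarith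
  have rc: "real r \<le> c + 1" unfolding r_def using assms by linarith
  have lpos: "real l > 0" using assms by simp
  have x1: "real l / (exp 1 * real m) \<le> 1"
  proof -
    have "real l \<le> real m" using assms by simp
    also have "\<dots> \<le> exp 1 * real m" using mult_right_mono[of 1 "exp 1" "real m"] by simp
    finally show ?thesis using lpos by simp
  qed
  have x0: "0 < real l / (exp 1 * real m)" using lpos assms by simp
  have "(real l / (exp 1 * real m)) powr (c + 1) \<le> (real l / (exp 1 * real m)) powr (real r)"
    using rc x0 x1 by (intro powr_mono') auto
  also have "\<dots> = (real l / (exp 1 * real m)) ^ r" using x0 by (simp add: powr_realpow)
  also have "\<dots> \<le> real (l choose r) / real (m choose r)" using binom_ratio_ge[OF r1 rl assms(3)] .
  also have "\<dots> \<le> (\<Prod>j\<in>{l<..m}. 1 - c / real j)" unfolding r_def using prod_ratio_ge[OF assms] .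
  finally show ?thesis .
qed




lemma binom_step: "k < n \<Longrightarrow> Suc k * (n choose Suc k) = (n - k) * (n choose k)"
proof -
  assume kn: "k < n"
  then obtain n' where n: "n = Suc n'" by (cases n) auto
  have "Suc k * (n choose Suc k) = n * (n' choose k)" unfolding n by (rule Suc_times_binomial)
  also have "\<dots> = (n - k) * (n choose k)" using binomial_absorb_comp[of n k] n by simp
  finally show ?thesis .
qed

lemma double_count:
  fixes A :: "nat set \<Rightarrow> real" and N :: "nat set"
  assumes fN: "finite N"
  shows "(\<Sum>T\<in>{T. T \<subseteq> N \<and> card T = k}. \<Sum>i\<in>N - T. A (insert i T))
       = real (Suc k) * (\<Sum>T\<in>{T. T \<subseteq> N \<and> card T = Suc k}. A T)"
proof -
  define S1 where "S1 = Sigma {T. T \<subseteq> N \<and> card T = k} (\<lambda>T. N - T)"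
  define S2 where "S2 = Sigma {T. T \<subseteq> N \<and> card T = Suc k} (\<lambda>T. T)"
  have fin1: "finite {T. T \<subseteq> N \<and> card T = k}" for k using fN by (rule finite_subset[rotated, OF finite_Collect_subsets]) auto
  have "(\<Sum>T\<in>{T. T \<subseteq> N \<and> card T = k}. \<Sum>i\<in>N - T. A (insert i T)) = (\<Sum>(T,i)\<in>S1. A (insert i T))"
    unfolding S1_def by (rule sum.Sigma) (use fin1 fN in auto)
  also have "\<dots> = (\<Sum>(T,i)\<in>S2. A T)"
  proof (rule sum.reindex_bij_witness[where j="\<lambda>(T,i). (insert i T, i)" and i="\<lambda>(T,i). (T - {i}, i)"])
    fix a assume a: "a \<in> S1"
    then obtain T i where ti: "a = (T, i)" "T \<subseteq> N" "card T = k" "i \<in> N" "i \<notin> T" unfolding S1_def by auto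
    have fT: "finite T" using ti fN finite_subset by blast
    show "(\<lambda>(T, i). (T - {i}, i)) ((\<lambda>(T, i). (insert i T, i)) a) = a" using ti by auto
    show "(\<lambda>(T, i). (insert i T, i)) a \<in> S2" using ti fT unfolding S2_def by auto
    show "(\<lambda>(T, i). A T) ((\<lambda>(T, i). (insert i T, i)) a) = (\<lambda>(T, i). A (insert i T)) a" using ti by auto
  next
    fix b assume b: "b \<in> S2"
    then obtain T i where ti: "b = (T, i)" "T \<subseteq> N" "card T = Suc k" "i \<in> T" unfolding S2_def by auto
    have fT: "finite T" using ti fN finite_subset by blast
    show "(\<lambda>(T, i). (insert i T, i)) ((\<lambda>(T, i). (T - {i}, i)) b) = b" using ti by auto
    show "(\<lambda>(T, i). (T - {i}, i)) b \<in> S1" using ti fT unfolding S1_def by auto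
  qed
  also have "\<dots> = (\<Sum>T\<in>{T. T \<subseteq> N \<and> card T = Suc k}. \<Sum>i\<in>T. A T)"
    unfolding S2_def by (rule sum.Sigma[symmetric]) (use fin1 fN finite_subset in auto)
  also have "\<dots> = (\<Sum>T\<in>{T. T \<subseteq> N \<and> card T = Suc k}. real (Suc k) * A T)"
    by (intro sum.cong refl) simp
  finally show ?thesis by (simp add: sum_distrib_left)
qed




lemma chain:
  fixes A :: "nat set \<Rightarrow> real" and n l :: nat and c :: real
  assumes loc: "\<And>T. T \<subseteq> {0..<n} \<Longrightarrow> (\<Sum>i\<in>{0..<n} - T. A (insert i T)) - real (card ({0..<n} - T)) * A T \<le> c * (A {0..<n} - A T)"
    and c0: "0 < c" and cl: "c \<le> real l" and ln: "l \<le> n"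
    and ent: "A {} \<le> A {0..<n}"
  shows "A {0..<n} - A {} \<le> (exp 1 * real n / real l) powr (c + 1) / real (n choose l)
            * (\<Sum>B\<in>{B. B \<subseteq> {0..<n} \<and> card B = l}. A {0..<n} - A ({0..<n} - B))"
proof -
  define N where "N = {0..<n}"
  define Sub where "Sub k = {T. T \<subseteq> N \<and> card T = k}" for k
  define S where "S k = (\<Sum>T\<in>Sub k. A T)" for k
  define D where "D k = real (n choose k)" for k
  define b where "b k = A N - S k / D k" for k
  have fN: "finite N" unfolding N_def by simp
  have cN: "card N = n" unfolding N_def by simp
  have fSub: "finite (Sub k)" for k unfolding Sub_def using fN by (rule finite_subset[rotated, OF finite_Collect_subsets]) auto
  have cSub: "card (Sub k) = n choose k" for k unfolding Sub_def using n_subsets[OF fN, of k] cN by simp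
  have l1: "1 \<le> l" using c0 cl by linarith
  have rec: "(1 - c / real (n - k)) * b k \<le> b (Suc k)" if k: "k < n" for k
  proof -
    have "(\<Sum>T\<in>Sub k. (\<Sum>i\<in>N - T. A (insert i T)) - real (card (N - T)) * A T) \<le> (\<Sum>T\<in>Sub k. c * (A N - A T))"
      using loc unfolding N_def Sub_def by (intro sum_mono) auto
    moreover have "(\<Sum>T\<in>Sub k. (\<Sum>i\<in>N - T. A (insert i T)) - real (card (N - T)) * A T)
         = real (Suc k) * S (Suc k) - real (n - k) * S k"
    proof -
      have "(\<Sum>T\<in>Sub k. real (card (N - T)) * A T) = (\<Sum>T\<in>Sub k. real (n - k) * A T)"
      proof (intro sum.cong refl)
        fix T assume "T \<in> Sub k"
        then have "T \<subseteq> N" "card T = k" unfolding Sub_def by auto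
        then have "card (N - T) = n - k" using fN cN by (simp add: card_Diff_subset finite_subset)
        then show "real (card (N - T)) * A T = real (n - k) * A T" by simp
      qed
      then show ?thesis unfolding S_def Sub_def using double_count[OF fN, where k=k and A=A]
        by (simp add: sum_subtractf sum_distrib_left)
    qed
    moreover have "(\<Sum>T\<in>Sub k. c * (A N - A T)) = c * (D k * A N - S k)"
      unfolding S_def D_def sum_distrib_left[symmetric] sum_subtractf by (simp add: cSub)
    ultimately have I: "real (Suc k) * S (Suc k) \<le> real (n - k) * S k + c * (D k * A N - S k)" by simp
    have Dk: "D k > 0" unfolding D_def using k by simp
    have nk: "real (n - k) > 0" using k by simp
    have DD: "real (Suc k) * D (Suc k) = real (n - k) * D k"
      unfolding D_def using binom_step[OF k] by (metis of_nat_mult)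
    have "S (Suc k) / D (Suc k) = real (Suc k) * S (Suc k) / (real (n - k) * D k)"
      using DD by (metis mult_divide_mult_cancel_left_if of_nat_Suc of_nat_eq_0_iff nat.distinct(1))
    also have "\<dots> \<le> (real (n - k) * S k + c * (D k * A N - S k)) / (real (n - k) * D k)"
      using I Dk nk by (intro divide_right_mono) auto
    also have "\<dots> = S k / D k + c / real (n - k) * (A N - S k / D k)"
      using Dk nk by (simp add: field_simps)
    finally have "S (Suc k) / D (Suc k) \<le> S k / D k + c / real (n - k) * (A N - S k / D k)" .
    then show ?thesis unfolding b_def by (simp add: algebra_simps)
  qed
  have ind: "(\<Prod>j\<in>{n - k<..n}. 1 - c / real j) * b 0 \<le> b k" if "k \<le> n - l" for k
    using that
  proof (induction k)
    case 0
    then show ?case by simp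
  next
    case (Suc k)
    have kn: "k < n" using Suc.prems l1 by simp
    have eq: "{n - Suc k<..n} = insert (n - k) {n - k<..n}" using kn by auto
    have f0: "0 \<le> 1 - c / real (n - k)"
    proof -
      have "c \<le> real (n - k)" using cl Suc.prems by linarith
      then show ?thesis using kn by (simp add: field_simps)
    qed
    have "(\<Prod>j\<in>{n - Suc k<..n}. 1 - c / real j) * b 0 = (1 - c / real (n - k)) * ((\<Prod>j\<in>{n - k<..n}. 1 - c / real j) * b 0)"
      unfolding eq by simp
    also have "\<dots> \<le> (1 - c / real (n - k)) * b k"
      using Suc.IH Suc.prems f0 by (intro mult_left_mono) auto
    also have "\<dots> \<le> b (Suc k)" using rec[OF kn] .
    finally show ?case .
  qed
  define P where "P = (\<Prod>j\<in>{l<..n}. 1 - c / real j)"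
  have Pb: "P * b 0 \<le> b (n - l)" using ind[of "n - l"] ln unfolding P_def by (simp add: diff_diff_cancel)
  have Pge: "(real l / (exp 1 * real n)) powr (c + 1) \<le> P" unfolding P_def using prod_bound[OF c0 cl ln] .
  have xpos: "0 < real l / (exp 1 * real n)" using l1 ln by simp
  define C where "C = (exp 1 * real n / real l) powr (c + 1)"
  have Cx: "C * (real l / (exp 1 * real n)) powr (c + 1) = 1"
    unfolding C_def using xpos l1 ln by (simp add: powr_mult[symmetric])
  have b0: "b 0 = A N - A {}"
  proof -
    have "Sub 0 = {{}}" unfolding Sub_def using fN by (auto dest: finite_subset)
    then show ?thesis unfolding b_def S_def D_def by simp
  qed
  have b0nn: "0 \<le> b 0" using b0 ent unfolding N_def by simp
  have Cpos: "0 < C" unfolding C_def using l1 ln by simp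
  have "b 0 = C * (real l / (exp 1 * real n)) powr (c + 1) * b 0" using Cx by simp
  also have "\<dots> \<le> C * P * b 0" using Pge Cpos b0nn by (intro mult_right_mono mult_left_mono) auto
  also have "\<dots> \<le> C * b (n - l)" using Pb Cpos by (simp add: mult.assoc mult_left_mono)
  finally have main: "b 0 \<le> C * b (n - l)" .
  have sumB: "(\<Sum>B\<in>Sub l. A N - A (N - B)) = D l * A N - S (n - l)"
  proof -
    have "(\<Sum>B\<in>Sub l. A (N - B)) = S (n - l)" unfolding S_def
    proof (rule sum.reindex_bij_witness[where i="\<lambda>B. N - B" and j="\<lambda>B. N - B"])
      fix B assume "B \<in> Sub l"
      then have B: "B \<subseteq> N" "card B = l" unfolding Sub_def by auto
      show "N - (N - B) = B" using B by auto
      show "N - B \<in> Sub (n - l)" using B fN cN unfolding Sub_def by (auto simp: card_Diff_subset finite_subset)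
    next
      fix T assume "T \<in> Sub (n - l)"
      then have T: "T \<subseteq> N" "card T = n - l" unfolding Sub_def by auto
      show "N - (N - T) = T" using T by auto
      have "card (N - T) = l" using T fN cN ln by (simp add: card_Diff_subset finite_subset)
      then show "N - T \<in> Sub l" unfolding Sub_def by auto
    qed simp
    then show ?thesis by (simp add: sum_subtractf cSub D_def)
  qed
  have Dl: "D (n - l) = D l" unfolding D_def using binomial_symmetric[OF ln] by simp
  have Dlp: "D l > 0" unfolding D_def using ln by simp
  have "C / D l * (\<Sum>B\<in>Sub l. A N - A (N - B)) = C * b (n - l)"
    unfolding sumB b_def Dl using Dlp by (simp add: field_simps)
  then show ?thesis using main b0 unfolding C_def Sub_def N_def D_def by simp
qed


theorem lemma2p5:
  fixes n l :: nat and \<mu> :: "(nat \<Rightarrow> int) \<Rightarrow> real" and \<alpha> :: real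
  assumes "is_dist {0..<n} \<mu>"
    and "0 < \<alpha>" and "\<alpha> < 1"
    and "\<forall>\<Lambda>. \<Lambda> \<subseteq> {0..<n} \<longrightarrow> (\<forall>\<sigma>\<in>supp \<Lambda> (marg {0..<n} \<mu> \<Lambda>).
           product_dominated ({0..<n} - \<Lambda>)
             (marg {0..<n} (cond {0..<n} \<mu> \<Lambda> \<sigma>) ({0..<n} - \<Lambda>)) (1 / \<alpha>))"
    and "1 / \<alpha> \<le> real l" and "l \<le> n"
  shows "uniform_block_factorization n \<mu> l ((exp 1 * real n / real l) powr (1 / \<alpha> + 1))"
  unfolding uniform_block_factorization_def
proof (intro allI impI)
  fix f :: "(nat \<Rightarrow> int) \<Rightarrow> real"
  assume fnn: "\<forall>\<sigma>\<in>supp {0..<n} \<mu>. 0 \<le> f \<sigma>"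
  define N where "N = {0..<n}"
  define A where "A = AA N \<mu> f"
  have fN: "finite N" unfolding N_def by simp
  have mu: "\<forall>\<sigma>. 0 \<le> \<mu> \<sigma>" using assms(1) unfolding is_dist_def by simp
  have mu1: "sum \<mu> (cube N) = 1" using assms(1) unfolding is_dist_def N_def by simp
  have f: "\<forall>\<sigma>\<in>cube N. \<mu> \<sigma> \<noteq> 0 \<longrightarrow> 0 \<le> f \<sigma>" using fnn unfolding supp_def N_def by auto
  have AN: "A N = expect N \<mu> (\<lambda>\<sigma>. xlogx (f \<sigma>))"
    unfolding A_def AA_full[OF fN mu] expect_def ..
  have A0: "A {} = xlogx (expect N \<mu> f)" unfolding A_def using AA_empty[OF mu1] .
  have EntA: "Ent N \<mu> f = A N - A {}" unfolding Ent_def AN A0 ..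
  have blk: "block_ent n \<mu> B f = A N - A (N - B)" if "B \<subseteq> N" for B
    unfolding A_def N_def using block_ent_AA[OF assms(1)] that N_def by simp
  have loc: "(\<Sum>i\<in>N - T. A (insert i T)) - real (card (N - T)) * A T \<le> (1/\<alpha>) * (A N - A T)"
    if T: "T \<subseteq> N" for T
  proof -
    have PD: "\<forall>\<tau>\<in>supp T (marg N \<mu> T). product_dominated (N - T) (marg N (cond N \<mu> T \<tau>) (N - T)) (1/\<alpha>)"
      using assms(4) T unfolding N_def by blast
    have "\<alpha> * ((\<Sum>i\<in>N - T. A (insert i T)) - real (card (N - T)) * A T) \<le> A N - A T"
      unfolding A_def by (rule local_cube[OF fN T mu f assms(2) PD])
    then show ?thesis using assms(2) by (simp add: field_simps)
  qed
  have ent: "A {} \<le> A N"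
  proof -
    have "(\<Sum>x\<in>cube N. \<mu> x * f x * ln 1) \<le> (\<Sum>x\<in>cube N. \<mu> x * xlogx (f x)) - xlogx (\<Sum>x\<in>cube N. \<mu> x * f x)
           + (\<Sum>x\<in>cube N. \<mu> x * f x) * ln (\<Sum>x\<in>cube N. \<mu> x * 1)"
      by (rule gibbs) (use fN mu f in auto)
    then show ?thesis using mu1 unfolding AN A0 expect_def by simp
  qed
  have "A {0..<n} - A {} \<le> (exp 1 * real n / real l) powr (1/\<alpha> + 1) / real (n choose l)
            * (\<Sum>B\<in>{B. B \<subseteq> {0..<n} \<and> card B = l}. A {0..<n} - A ({0..<n} - B))"
  proof (rule chain)
    show "\<And>T. T \<subseteq> {0..<n} \<Longrightarrow> (\<Sum>i\<in>{0..<n} - T. A (insert i T)) - real (card ({0..<n} - T)) * A T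
          \<le> 1 / \<alpha> * (A {0..<n} - A T)" using loc unfolding N_def by blast
    show "A {} \<le> A {0..<n}" using ent unfolding N_def .
  qed (use assms(2,5,6) in auto)
  also have "(\<Sum>B\<in>{B. B \<subseteq> {0..<n} \<and> card B = l}. A {0..<n} - A ({0..<n} - B))
      = (\<Sum>B\<in>{B. B \<subseteq> {0..<n} \<and> card B = l}. block_ent n \<mu> B f)"
    using blk unfolding N_def by (intro sum.cong refl) auto
  finally show "Ent {0..<n} \<mu> f \<le> (exp 1 * real n / real l) powr (1 / \<alpha> + 1) / real (n choose l) *
         (\<Sum>B\<in>{B. B \<subseteq> {0..<n} \<and> card B = l}. block_ent n \<mu> B f)"
    using EntA unfolding N_def by simp
qed

end
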